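(* Let $S=\{p_1,\dots,p_n\}$ be a set of point sites in $\mathbb{R}^d$ with an admissible system of distance functions $\{d_{p_i}\}$, let $C\subset\mathbb{R}^d$ be a bounded open set, and let $\lambda_1,\dots,\lambda_n>0$ with $\sum_i\lambda_i=\mu(C)$. Let $w=(w_1,\dots,w_n)$ be a weight vector with $\mu(C\cap\mathrm{VR}_w(p_i,S))=\lambda_i$ for $i=1,\dots,n$, and let $f_w:C\to S$ be a map with $f_w(z)=p_i$ for $z\in C_i:=C\cap\mathrm{VR}_w(p_i,S)$ (on the remaining points $C\cap V_w(S)$, $f_w$ assigns some site $p_i$ minimizing $d_{p_i}(z)-w_i$). Then $f_w\in F_\Lambda$ and $f_w$ minimizes $$\mathrm{cost}(f)=\int_C d_{f(z)}(z)\,\mathrm{d}\mu(z)$$ over all $f\in F_\Lambda$. Moreover, any $f\in F_\Lambda$ with $\mathrm{cost}(f)=\mathrm{cost}(f_w)$ coincides with $f_w$ outside a set of $\mu$-measure zero.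
   Context: $\mu$ is a measure defined on all Lebesgue-measurable subsets of $\mathbb{R}^d$ such that $\mu$ and $d$-dimensional Lebesgue measure are mutually absolutely continuous. Each site $p\in S$ has a continuous function $d_p:\mathbb{R}^d\to\mathbb{R}_{\ge 0}$. For $p\neq q\in S$ and $\gamma\in\mathbb{R}$ let $R_\gamma(p,q)=\{z\in\mathbb{R}^d : d_p(z)-d_q(z)<\gamma\}$. The system $\{d_p\}_{p\in S}$ is called admissible if for all $p\neq q\in S$ and every bounded open set $C\subset\mathbb{R}^d$ there exist real numbers $m_{pq}<M_{pq}$ such that the function $\gamma\mapsto\mu(C\cap R_\gamma(p,q))$ is continuous on $\mathbb{R}$ and increases (monotonically) from $0$ to $\mu(C)$ as $\gamma$ grows from $m_{pq}$ to $M_{pq}$; moreover $C\cap R_\gamma(p,q)=\emptyset$ for $\gamma\le m_{pq}$ and $C\subset R_\gamma(p,q)$ for $\gamma\ge M_{pq}$. For a weight vector $w$, $\mathrm{VR}_w(p_i,S)=\bigcap_{j\neq i}R_{w_i-w_j}(p_i,p_j)$ (points $z$ with $d_{p_i}(z)-w_i<d_{p_j}(z)-w_j$ for all $j\neq i$), and $V_w(S)=\mathbb{R}^d\setminus\bigcup_i\mathrm{VR}_w(p_i,S)$. $F_\Lambda$ denotes the set of $\mu$-measurable maps $f:C\to S$ (each $f^{-1}(p_i)$ measurable) with $\mu(f^{-1}(p_i))=\lambda_i$ for $i=1,\dots,n$. *)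

theory Defs
  imports "HOL-Analysis.Analysis"
begin

text \<open>Sites are indexed by i in {1..n} via p :: nat => 'a; the distance function of
  site q is D q :: 'a => real.\<close>

definition Rgam :: "('a \<Rightarrow> 'a \<Rightarrow> real) \<Rightarrow> 'a \<Rightarrow> 'a \<Rightarrow> real \<Rightarrow> 'a set" where
  "Rgam D p q \<gamma> = {z. D p z - D q z < \<gamma>}"

definition admissible :: "'a::euclidean_space measure \<Rightarrow> 'a set \<Rightarrow> ('a \<Rightarrow> 'a \<Rightarrow> real) \<Rightarrow> bool" where
  "admissible \<mu> S D \<longleftrightarrow>
    (\<forall>p\<in>S. \<forall>q\<in>S. p \<noteq> q \<longrightarrow>
      (\<forall>C. bounded C \<and> open C \<longrightarrow>
        (\<exists>m M. m < M
           \<and> continuous_on UNIV (\<lambda>\<gamma>. emeasure \<mu> (C \<inter> Rgam D p q \<gamma>))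
           \<and> mono_on {m..M} (\<lambda>\<gamma>. emeasure \<mu> (C \<inter> Rgam D p q \<gamma>))
           \<and> (\<forall>\<gamma>\<le>m. C \<inter> Rgam D p q \<gamma> = {})
           \<and> (\<forall>\<gamma>\<ge>M. C \<subseteq> Rgam D p q \<gamma>))))"

definition VR :: "('a \<Rightarrow> 'a \<Rightarrow> real) \<Rightarrow> (nat \<Rightarrow> 'a) \<Rightarrow> nat \<Rightarrow> (nat \<Rightarrow> real) \<Rightarrow> nat \<Rightarrow> 'a set" where
  "VR D p n w i = (\<Inter>j\<in>{1..n} - {i}. Rgam D (p i) (p j) (w i - w j))"

definition Vw :: "('a \<Rightarrow> 'a \<Rightarrow> real) \<Rightarrow> (nat \<Rightarrow> 'a) \<Rightarrow> nat \<Rightarrow> (nat \<Rightarrow> real) \<Rightarrow> 'a set" where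
  "Vw D p n w = UNIV - (\<Union>i\<in>{1..n}. VR D p n w i)"

definition F_Lambda :: "'a measure \<Rightarrow> 'a set \<Rightarrow> (nat \<Rightarrow> 'a) \<Rightarrow> nat \<Rightarrow> (nat \<Rightarrow> real) \<Rightarrow> ('a \<Rightarrow> 'a) set" where
  "F_Lambda \<mu> C p n lam = {f. (\<forall>z\<in>C. f z \<in> p ` {1..n}) \<and>
     (\<forall>i\<in>{1..n}. {z\<in>C. f z = p i} \<in> sets \<mu> \<and> emeasure \<mu> {z\<in>C. f z = p i} = ennreal (lam i))}"

definition cost :: "'a measure \<Rightarrow> ('a \<Rightarrow> 'a \<Rightarrow> real) \<Rightarrow> 'a set \<Rightarrow> ('a \<Rightarrow> 'a) \<Rightarrow> ennreal" where
  "cost \<mu> D C f = (\<integral>\<^sup>+ z\<in>C. ennreal (D (f z) z) \<partial>\<mu>)"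

end

theory Submission
  imports Defs
begin

lemma integrable_ind_bdd:
  fixes g :: "'a \<Rightarrow> real"
  assumes "A \<in> sets M" "emeasure M A < \<infinity>" "g \<in> borel_measurable M" "\<forall>z\<in>A. \<bar>g z\<bar> \<le> B"
  shows "integrable M (\<lambda>z. indicator A z * g z)"
proof (rule Bochner_Integration.integrable_bound[where f="\<lambda>z. B * indicator A z"])
  show "integrable M (\<lambda>z. B * indicator A z)"
    using assms(1,2) by (intro integrable_mult_right integrable_real_indicator) auto
  show "(\<lambda>z. indicator A z * g z) \<in> borel_measurable M"
    using assms(1,3) by measurable
  show "AE x in M. norm (indicator A x * g x) \<le> norm (B * indicator A x)"
    using assms(4) by (intro AE_I2) (auto simp: indicator_def)
qed

theorem theorem2:
  fixes \<mu> :: "'a::euclidean_space measure"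
    and p :: "nat \<Rightarrow> 'a" and n :: nat
    and D :: "'a \<Rightarrow> 'a \<Rightarrow> real"
    and C :: "'a set" and lam w :: "nat \<Rightarrow> real" and fw :: "'a \<Rightarrow> 'a"
  assumes sets_mu: "sets \<mu> = sets lebesgue"
    and abs_cont: "null_sets \<mu> = null_sets lebesgue"
    and inj: "inj_on p {1..n}"
    and D_cont: "\<And>i. i \<in> {1..n} \<Longrightarrow> continuous_on UNIV (D (p i))"
    and D_nonneg: "\<And>i z. i \<in> {1..n} \<Longrightarrow> D (p i) z \<ge> 0"
    and adm: "admissible \<mu> (p ` {1..n}) D"
    and C_bdd: "bounded C" and C_open: "open C"
    and lam_pos: "\<And>i. i \<in> {1..n} \<Longrightarrow> lam i > 0"
    and lam_sum: "emeasure \<mu> C = ennreal (\<Sum>i\<in>{1..n}. lam i)"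
    and w_cells: "\<And>i. i \<in> {1..n} \<Longrightarrow> emeasure \<mu> (C \<inter> VR D p n w i) = ennreal (lam i)"
    and fw_cells: "\<And>i z. i \<in> {1..n} \<Longrightarrow> z \<in> C \<inter> VR D p n w i \<Longrightarrow> fw z = p i"
    and fw_rest: "\<And>z. z \<in> C \<inter> Vw D p n w \<Longrightarrow>
        \<exists>i\<in>{1..n}. fw z = p i \<and> (\<forall>j\<in>{1..n}. D (p i) z - w i \<le> D (p j) z - w j)"
  shows "fw \<in> F_Lambda \<mu> C p n lam
    \<and> (\<forall>f\<in>F_Lambda \<mu> C p n lam. cost \<mu> D C fw \<le> cost \<mu> D C f)
    \<and> (\<forall>f\<in>F_Lambda \<mu> C p n lam. cost \<mu> D C f = cost \<mu> D C fw \<longrightarrow>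
          (AE z in \<mu>. z \<in> C \<longrightarrow> f z = fw z))"
proof -
  define I where "I = {1..n}"
  have finI: "finite I" unfolding I_def by simp
  define A where "A f i = {z\<in>C. f z = p i}" for f :: "'a \<Rightarrow> 'a" and i
  define V where "V i = VR D p n w i" for i
  define N where "N = C \<inter> Vw D p n w"
  have meas_cont: "g \<in> borel_measurable \<mu>" if "continuous_on UNIV g" for g :: "'a \<Rightarrow> real"
    using that sets_mu
    by (metis continuous_imp_measurable_on measurable_cong_sets
        measurable_on_imp_borel_measurable_lebesgue_UNIV)
  have open_meas: "X \<in> sets \<mu>" if "open X" for X
    using that sets_mu by simp
  have C_meas: "C \<in> sets \<mu>" using open_meas C_open by blast
  have C_fin: "emeasure \<mu> C < \<infinity>" using lam_sum by simp
  have V_open: "open (V i)" if "i \<in> I" for i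
    unfolding V_def VR_def Rgam_def
  proof (rule open_INT)
    show "finite ({1..n} - {i})" by simp
    show "\<forall>x\<in>{1..n} - {i}. open {z. D (p i) z - D (p x) z < w i - w x}"
    proof
      fix j assume "j \<in> {1..n} - {i}"
      hence "continuous_on UNIV (\<lambda>z. D (p i) z - D (p j) z)"
        using that D_cont unfolding I_def by (intro continuous_on_diff) auto
      thus "open {z. D (p i) z - D (p j) z < w i - w j}"
        by (intro open_Collect_less) (auto intro: continuous_on_const)
    qed
  qed
  have V_meas: "V i \<in> sets \<mu>" if "i \<in> I" for i using V_open[OF that] open_meas by blast
  have V_char: "D (p i) z - w i < D (p j) z - w j"
    if "i \<in> I" "j \<in> I" "j \<noteq> i" "z \<in> V i" for i j z
  proof -
    have "D (p i) z - D (p j) z < w i - w j"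
      using that unfolding V_def VR_def Rgam_def I_def by auto
    thus ?thesis by linarith
  qed
  have V_disj: "z \<notin> V j" if "i \<in> I" "j \<in> I" "j \<noteq> i" "z \<in> V i" for i j z
    using V_char[OF that] V_char[of j i z] that by force
  have N_eq: "N = C - (\<Union>i\<in>I. V i)" unfolding N_def Vw_def V_def I_def by auto
  have N_meas: "N \<in> sets \<mu>" unfolding N_eq using C_meas V_meas finI by auto
  have N_null: "N \<in> null_sets \<mu>"
  proof -
    have disj: "disjoint_family_on (\<lambda>i. C \<inter> V i) I"
      unfolding disjoint_family_on_def using V_disj by blast
    have "(\<Sum>i\<in>I. emeasure \<mu> (C \<inter> V i)) = emeasure \<mu> (\<Union>i\<in>I. C \<inter> V i)"
      using C_meas V_meas finI disj by (intro sum_emeasure) auto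
    moreover have "(\<Sum>i\<in>I. emeasure \<mu> (C \<inter> V i)) = ennreal (\<Sum>i\<in>I. lam i)"
    proof -
      have "(\<Sum>i\<in>I. emeasure \<mu> (C \<inter> V i)) = (\<Sum>i\<in>I. ennreal (lam i))"
        using w_cells unfolding V_def I_def by (intro sum.cong) auto
      also have "\<dots> = ennreal (\<Sum>i\<in>I. lam i)"
        using lam_pos unfolding I_def by (intro sum_ennreal) (auto intro: less_imp_le)
      finally show ?thesis .
    qed
    moreover have "emeasure \<mu> (\<Union>i\<in>I. C \<inter> V i) + emeasure \<mu> N = emeasure \<mu> C"
    proof -
      have "C = (\<Union>i\<in>I. C \<inter> V i) \<union> N" unfolding N_eq by auto
      moreover have "(\<Union>i\<in>I. C \<inter> V i) \<inter> N = {}" unfolding N_eq by auto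
      moreover have "(\<Union>i\<in>I. C \<inter> V i) \<in> sets \<mu>" using C_meas V_meas finI by auto
      ultimately show ?thesis using N_meas by (metis plus_emeasure)
    qed
    ultimately have "ennreal (\<Sum>i\<in>I. lam i) + emeasure \<mu> N = ennreal (\<Sum>i\<in>I. lam i)"
      using lam_sum unfolding I_def by simp
    hence "emeasure \<mu> N = 0"
      by simp
    thus ?thesis using N_meas by auto
  qed
  have idx_uniq: "i = k" if "i \<in> I" "k \<in> I" "p i = p k" for i k
    using inj that unfolding I_def by (meson inj_onD)
  have fw_range: "\<exists>k\<in>I. fw z = p k \<and> (\<forall>j\<in>I. D (p k) z - w k \<le> D (p j) z - w j)"
    if zC: "z \<in> C" for z
  proof (cases "z \<in> N")
    case True thus ?thesis using fw_rest unfolding N_def I_def by blast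
  next
    case False
    then obtain k where k: "k \<in> I" "z \<in> V k" unfolding N_eq using zC by blast
    hence "fw z = p k" using fw_cells zC unfolding V_def I_def by blast
    moreover have "\<forall>j\<in>I. D (p k) z - w k \<le> D (p j) z - w j"
    proof
      fix j assume j: "j \<in> I"
      show "D (p k) z - w k \<le> D (p j) z - w j"
      proof (cases "j = k")
        case False thus ?thesis using V_char[OF k(1) j False k(2)] by linarith
      qed simp
    qed
    ultimately show ?thesis using k by blast
  qed
  have sum_single: "(\<Sum>i\<in>I. indicator (A f i) z * a i) = a k"
    if "k \<in> I" "z \<in> C" "f z = p k" for f z k and a :: "nat \<Rightarrow> real"
  proof -
    have "(\<Sum>i\<in>I. indicator (A f i) z * a i) = (\<Sum>i\<in>I. if i = k then a i else 0)"
    proof (rule sum.cong)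
      fix i assume "i \<in> I"
      thus "indicator (A f i) z * a i = (if i = k then a i else 0)"
        using idx_uniq[of i k] that unfolding A_def by (auto simp: indicator_def)
    qed simp
    thus ?thesis using finI that by simp
  qed
  have sum_out: "(\<Sum>i\<in>I. indicator (A f i) z * a i) = 0"
    if "z \<notin> C" for f z and a :: "nat \<Rightarrow> real"
    using that unfolding A_def by (auto simp: indicator_def)
  have fwF: "fw \<in> F_Lambda \<mu> C p n lam"
    unfolding F_Lambda_def
  proof (intro CollectI conjI ballI)
    fix z assume "z \<in> C" thus "fw z \<in> p ` {1..n}" using fw_range unfolding I_def by blast
  next
    fix i assume i: "i \<in> {1..n}"
    have eq: "{z\<in>C. fw z = p i} = (C \<inter> V i) \<union> ({z\<in>C. fw z = p i} \<inter> N)"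
    proof (intro equalityI subsetI)
      fix z assume z: "z \<in> {z\<in>C. fw z = p i}"
      show "z \<in> (C \<inter> V i) \<union> ({z\<in>C. fw z = p i} \<inter> N)"
      proof (cases "z \<in> N")
        case False
        then obtain k where k: "k \<in> I" "z \<in> V k" unfolding N_eq using z by blast
        hence "fw z = p k" using fw_cells z unfolding V_def I_def by blast
        hence "k = i" using idx_uniq[of k i] k i z unfolding I_def by auto
        thus ?thesis using k z by auto
      qed (use z in auto)
    next
      fix z assume "z \<in> (C \<inter> V i) \<union> ({z\<in>C. fw z = p i} \<inter> N)"
      thus "z \<in> {z\<in>C. fw z = p i}" using fw_cells i unfolding V_def by auto
    qed
    have null2: "{z\<in>C. fw z = p i} \<inter> N \<in> null_sets \<mu>"
    proof -
      have "N \<in> null_sets lebesgue" using N_null abs_cont by simp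
      hence "{z\<in>C. fw z = p i} \<inter> N \<in> null_sets lebesgue"
        by (rule null_sets_completion_subset[rotated]) auto
      thus ?thesis using abs_cont by simp
    qed
    have CV: "C \<inter> V i \<in> sets \<mu>" using C_meas V_meas i unfolding I_def by auto
    show "{z\<in>C. fw z = p i} \<in> sets \<mu>"
      using null2 CV by (subst eq) (intro sets.Un; auto)
    show "emeasure \<mu> {z\<in>C. fw z = p i} = ennreal (lam i)"
      using null2 CV w_cells[OF i] unfolding V_def[symmetric] by (subst eq) (simp add: emeasure_Un_null_set)
  qed
  have bnd: "\<exists>B. \<forall>z\<in>C. \<bar>D (p i) z\<bar> \<le> B" if "i \<in> I" for i
  proof -
    have "compact (closure C)" using C_bdd by (simp add: compact_closure)
    moreover have "continuous_on (closure C) (D (p i))"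
      using D_cont that unfolding I_def by (meson continuous_on_subset subset_UNIV)
    ultimately have "bounded (D (p i) ` closure C)"
      by (simp add: compact_continuous_image compact_imp_bounded)
    then obtain B where "\<forall>x\<in>D (p i) ` closure C. \<bar>x\<bar> \<le> B" by (meson bounded_real)
    thus ?thesis by (meson closure_subset image_eqI subsetD)
  qed
  define cf where "cf f z = (\<Sum>i\<in>I. indicator (A f i) z * D (p i) z)" for f z
  define wf where "wf f z = (\<Sum>i\<in>I. indicator (A f i) z * w i)" for f z
  define gm where "gm z = cf fw z - wf fw z" for z
  have FA: "A f i \<in> sets \<mu>" "emeasure \<mu> (A f i) = ennreal (lam i)" "A f i \<subseteq> C"
    if "f \<in> F_Lambda \<mu> C p n lam" "i \<in> I" for f i
    using that unfolding F_Lambda_def A_def I_def by auto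
  have Frange: "\<exists>k\<in>I. f z = p k" if "f \<in> F_Lambda \<mu> C p n lam" "z \<in> C" for f z
    using that unfolding F_Lambda_def I_def by auto
  have cf_int: "integrable \<mu> (cf f)" if F: "f \<in> F_Lambda \<mu> C p n lam" for f
  proof -
    have T: "integrable \<mu> (\<lambda>z. indicator (A f i) z * D (p i) z)" if i: "i \<in> I" for i
    proof -
      obtain B where B: "\<forall>z\<in>C. \<bar>D (p i) z\<bar> \<le> B" using bnd[OF i] by blast
      show ?thesis
      proof (rule integrable_ind_bdd)
        show "A f i \<in> sets \<mu>" using FA[OF F i] by simp
        show "emeasure \<mu> (A f i) < \<infinity>" using FA[OF F i] by simp
        show "D (p i) \<in> borel_measurable \<mu>" using meas_cont D_cont i unfolding I_def by blast
        show "\<forall>z\<in>A f i. \<bar>D (p i) z\<bar> \<le> B" using B FA(3)[OF F i] by blast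
      qed
    qed
    have "integrable \<mu> (\<lambda>z. \<Sum>i\<in>I. indicator (A f i) z * D (p i) z)"
      using T by (rule Bochner_Integration.integrable_sum)
    moreover have "cf f = (\<lambda>z. \<Sum>i\<in>I. indicator (A f i) z * D (p i) z)"
      by (rule ext) (simp add: cf_def)
    ultimately show ?thesis by simp
  qed
  have wf_int: "integrable \<mu> (wf f)" and wf_integral: "integral\<^sup>L \<mu> (wf f) = (\<Sum>i\<in>I. lam i * w i)"
    if F: "f \<in> F_Lambda \<mu> C p n lam" for f
  proof -
    have ii: "integrable \<mu> (\<lambda>z. indicator (A f i) z * w i)" if i: "i \<in> I" for i
      using FA[OF F i] by (intro integrable_mult_left integrable_real_indicator) auto
    thus "integrable \<mu> (wf f)" unfolding wf_def by (intro Bochner_Integration.integrable_sum) auto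
    have "integral\<^sup>L \<mu> (wf f) = (\<Sum>i\<in>I. integral\<^sup>L \<mu> (\<lambda>z. indicator (A f i) z * w i))"
      unfolding wf_def using ii by (intro Bochner_Integration.integral_sum) auto
    also have "\<dots> = (\<Sum>i\<in>I. lam i * w i)"
    proof (rule sum.cong)
      fix i assume i: "i \<in> I"
      have "measure \<mu> (A f i) = lam i"
        using FA(2)[OF F i] lam_pos i unfolding measure_def I_def by (simp add: less_imp_le)
      thus "integral\<^sup>L \<mu> (\<lambda>z. indicator (A f i) z * w i) = lam i * w i"
        using FA[OF F i] by simp
    qed simp
    finally show "integral\<^sup>L \<mu> (wf f) = (\<Sum>i\<in>I. lam i * w i)" .
  qed
  have cf_pos: "0 \<le> cf f z" for f z
    unfolding cf_def using D_nonneg by (intro sum_nonneg mult_nonneg_nonneg) (auto simp: I_def)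
  have cost_eq: "cost \<mu> D C f = ennreal (integral\<^sup>L \<mu> (cf f))"
    if F: "f \<in> F_Lambda \<mu> C p n lam" for f
  proof -
    have "cost \<mu> D C f = (\<integral>\<^sup>+ z. ennreal (cf f z) \<partial>\<mu>)"
      unfolding cost_def
    proof (rule nn_integral_cong)
      fix z
      show "ennreal (D (f z) z) * indicator C z = ennreal (cf f z)"
      proof (cases "z \<in> C")
        case True
        then obtain k where k: "k \<in> I" "f z = p k" using Frange[OF F] by blast
        thus ?thesis using sum_single[where f=f, OF k(1) True k(2), of "\<lambda>i. D (p i) z"] True
          unfolding cf_def by simp
      next
        case False thus ?thesis using sum_out[OF False, of f "\<lambda>i. D (p i) z"]
          unfolding cf_def by simp
      qed
    qed
    also have "\<dots> = ennreal (integral\<^sup>L \<mu> (cf f))"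
      using cf_int[OF F] cf_pos by (intro nn_integral_eq_integral) auto
    finally show ?thesis .
  qed
  have cf_nonneg: "0 \<le> integral\<^sup>L \<mu> (cf f)" for f
    using cf_pos by (intro integral_nonneg_AE) auto
  have pw: "gm z + wf f z \<le> cf f z" if F: "f \<in> F_Lambda \<mu> C p n lam" for f z
  proof (cases "z \<in> C")
    case True
    then obtain i where i: "i \<in> I" "f z = p i" using Frange[OF F] by blast
    obtain k where k: "k \<in> I" "fw z = p k" "\<forall>j\<in>I. D (p k) z - w k \<le> D (p j) z - w j"
      using fw_range[OF True] by blast
    have "gm z = D (p k) z - w k"
      unfolding gm_def cf_def wf_def
      using sum_single[where f=fw, OF k(1) True k(2), of "\<lambda>i. D (p i) z"]
        sum_single[where f=fw, OF k(1) True k(2), of w] by simp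
    moreover have "wf f z = w i" "cf f z = D (p i) z"
      unfolding cf_def wf_def using sum_single[where f=f, OF i(1) True i(2)] by auto
    ultimately show ?thesis using k(3) i(1) by auto
  next
    case False thus ?thesis unfolding gm_def cf_def wf_def using sum_out[OF False] by simp
  qed
  have gm_int: "integrable \<mu> gm" unfolding gm_def
    using cf_int[OF fwF] wf_int[OF fwF] by auto
  have main: "integral\<^sup>L \<mu> (\<lambda>z. cf f z - gm z - wf f z) = integral\<^sup>L \<mu> (cf f) - integral\<^sup>L \<mu> (cf fw)"
    "integrable \<mu> (\<lambda>z. cf f z - gm z - wf f z)"
    if F: "f \<in> F_Lambda \<mu> C p n lam" for f
  proof -
    show int: "integrable \<mu> (\<lambda>z. cf f z - gm z - wf f z)"
      using cf_int[OF F] gm_int wf_int[OF F] by auto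
    have "integral\<^sup>L \<mu> (\<lambda>z. cf f z - gm z - wf f z)
        = integral\<^sup>L \<mu> (cf f) - integral\<^sup>L \<mu> gm - integral\<^sup>L \<mu> (wf f)"
      using cf_int[OF F] gm_int wf_int[OF F] by simp
    moreover have "integral\<^sup>L \<mu> gm = integral\<^sup>L \<mu> (cf fw) - integral\<^sup>L \<mu> (wf fw)"
      unfolding gm_def using cf_int[OF fwF] wf_int[OF fwF] by simp
    ultimately show "integral\<^sup>L \<mu> (\<lambda>z. cf f z - gm z - wf f z) = integral\<^sup>L \<mu> (cf f) - integral\<^sup>L \<mu> (cf fw)"
      using wf_integral[OF F] wf_integral[OF fwF] by simp
  qed
  have ge: "integral\<^sup>L \<mu> (cf fw) \<le> integral\<^sup>L \<mu> (cf f)" if F: "f \<in> F_Lambda \<mu> C p n lam" for f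
  proof -
    have "0 \<le> integral\<^sup>L \<mu> (\<lambda>z. cf f z - gm z - wf f z)"
      using pw[OF F] by (intro integral_nonneg_AE) (auto simp: algebra_simps)
    thus ?thesis using main[OF F] by simp
  qed
  have part2: "\<forall>f\<in>F_Lambda \<mu> C p n lam. cost \<mu> D C fw \<le> cost \<mu> D C f"
    using ge cost_eq fwF by (simp add: ennreal_leI)
  have part3: "AE z in \<mu>. z \<in> C \<longrightarrow> f z = fw z"
    if F: "f \<in> F_Lambda \<mu> C p n lam" and eqc: "cost \<mu> D C f = cost \<mu> D C fw" for f
  proof -
    have "integral\<^sup>L \<mu> (cf f) = integral\<^sup>L \<mu> (cf fw)"
      using eqc cost_eq[OF F] cost_eq[OF fwF] cf_nonneg by (simp add: ennreal_inj)
    hence "integral\<^sup>L \<mu> (\<lambda>z. cf f z - gm z - wf f z) = 0" using main[OF F] by simp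
    hence AE0: "AE z in \<mu>. cf f z - gm z - wf f z = 0"
      using integral_nonneg_eq_0_iff_AE[OF main(2)[OF F]] pw[OF F]
      by (auto simp: algebra_simps)
    have AEN: "AE z in \<mu>. z \<notin> N" using N_null by (rule AE_not_in)
    show ?thesis using AE0 AEN
    proof eventually_elim
      case (elim z)
      show ?case
      proof
        assume z: "z \<in> C"
        then obtain k where k: "k \<in> I" "z \<in> V k" using elim unfolding N_eq by blast
        hence fk: "fw z = p k" using fw_cells z unfolding V_def I_def by blast
        obtain i where i: "i \<in> I" "f z = p i" using Frange[OF F z] by blast
        have "gm z = D (p k) z - w k"
          unfolding gm_def cf_def wf_def
          using sum_single[where f=fw, OF k(1) z fk, of "\<lambda>i. D (p i) z"]
            sum_single[where f=fw, OF k(1) z fk, of w] by simp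
        moreover have "wf f z = w i" "cf f z = D (p i) z"
          unfolding cf_def wf_def using sum_single[where f=f, OF i(1) z i(2)] by auto
        ultimately have "D (p i) z - w i = D (p k) z - w k" using elim by simp
        hence "i = k" using V_char[OF k(1) i(1) _ k(2)] by force
        thus "f z = fw z" using i fk by simp
      qed
    qed
  qed
  show ?thesis using fwF part2 part3 by blast
qed

end
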